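(* Let $n\ge 2$, let $\mathcal A$ be a maximal commutative subalgebra of $\mathcal M_d(\mathbb C)$, and let $A,B,A',B'\in\mathcal A$ satisfy $\ker A\cap\ker B=\{0\}$ and $\ker A'\cap\ker B'=\{0\}$. Then $\mathcal F_{A,B}^{\mathcal A}=\mathcal F_{A',B'}^{\mathcal A}$ if and only if $AB'=A'B$.
   Context: For $A,B\in\mathcal A$, $\mathcal F_{A,B}^{\mathcal A}$ is the set of $n\times n$ block Toeplitz matrices $(T_{p-q})_{p,q=0}^{n-1}$ with all $T_j\in\mathcal A$ ($-(n-1)\le j\le n-1$) and $AT_j=BT_{j-n}$ for $j=1,\dots,n-1$. *)

theory Defs
  imports "HOL-Analysis.Analysis"
begin

text \<open>Complex d x d matrices are rendered as complex^'d^'d (d = CARD('d)).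
  Scalar multiplication c X is written as (mat c) ** X.\<close>

definition comm_subalgebra :: "(complex^'d^'d) set \<Rightarrow> bool" where
  "comm_subalgebra S \<longleftrightarrow>
     0 \<in> S \<and>
     (\<forall>X\<in>S. \<forall>Y\<in>S. X + Y \<in> S \<and> X ** Y \<in> S \<and> X ** Y = Y ** X) \<and>
     (\<forall>c. \<forall>X\<in>S. mat c ** X \<in> S)"

definition maximal_comm_subalgebra :: "(complex^'d^'d) set \<Rightarrow> bool" where
  "maximal_comm_subalgebra S \<longleftrightarrow>
     comm_subalgebra S \<and> (\<forall>S'. comm_subalgebra S' \<and> S \<subseteq> S' \<longrightarrow> S' = S)"

definition ker_mat :: "complex^'d^'d \<Rightarrow> (complex^'d) set" where
  "ker_mat A = {x. A *v x = 0}"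

text \<open>An n x n block matrix with d x d blocks is represented as a function
  nat => nat => block, with block indices p, q < n (zero outside the range).
  The block Toeplitz matrix with symbol T is (T (p - q)) for p, q < n.\<close>

definition block_toeplitz :: "nat \<Rightarrow> (int \<Rightarrow> complex^'d^'d) \<Rightarrow> (nat \<Rightarrow> nat \<Rightarrow> complex^'d^'d)" where
  "block_toeplitz n T = (\<lambda>p q. if p < n \<and> q < n then T (int p - int q) else 0)"

definition F_set :: "nat \<Rightarrow> (complex^'d^'d) set \<Rightarrow> complex^'d^'d \<Rightarrow> complex^'d^'d
    \<Rightarrow> (nat \<Rightarrow> nat \<Rightarrow> complex^'d^'d) set" where
  "F_set n \<A> A B = {block_toeplitz n T | T.
      (\<forall>j. - (int n - 1) \<le> j \<and> j \<le> int n - 1 \<longrightarrow> T j \<in> \<A>) \<and>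
      (\<forall>j. 1 \<le> j \<and> j \<le> int n - 1 \<longrightarrow> A ** T j = B ** T (j - int n))}"

end

theory Submission
  imports Defs
begin

lemma surjK:
  fixes A B :: "'a::field^'n^'n"
  assumes comm: "A ** B = B ** A"
    and ker: "\<And>v. A *v v = 0 \<Longrightarrow> B *v v = 0 \<Longrightarrow> v = 0"
    and U: "vec.subspace U" and BU: "(*v) B ` U \<subseteq> U"
    and k: "k \<in> U" "A *v k = 0"
  shows "\<exists>v\<in>U. A *v v = 0 \<and> B *v v = k"
proof -
  define K where "K = U \<inter> {v. A *v v = 0}"
  have sK: "vec.subspace K" unfolding K_def
    by (intro vec.subspace_inter U vec.subspace_kernel)
  have img: "(*v) B ` K \<subseteq> K"
  proof
    fix z assume "z \<in> (*v) B ` K"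
    then obtain v where v: "v \<in> K" "z = B *v v" by auto
    have "A *v z = B *v (A *v v)" using v comm by (simp add: matrix_vector_mul_assoc)
    then show "z \<in> K" using v BU unfolding K_def by auto
  qed
  have inj: "inj_on ((*v) B) (vec.span K)"
  proof -
    have "vec.span K = K" using sK vec.span_eq_iff by blast
    moreover have "inj_on ((*v) B) K"
    proof (rule inj_onI)
      fix u v assume uv: "u \<in> K" "v \<in> K" "B *v u = B *v v"
      have "A *v (u - v) = 0" using uv unfolding K_def by (simp add: vec.diff)
      moreover have "B *v (u - v) = 0" using uv by (simp add: vec.diff)
      ultimately show "u = v" using ker by force
    qed
    ultimately show ?thesis by metis
  qed
  have "vec.dim ((*v) B ` K) = vec.dim K"
    by (rule vec.dim_image_eq[OF matrix_vector_mul_linear_gen inj])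
  then have "(*v) B ` K = K"
    using vec.subspace_dim_equal[OF vec.subspace_image[OF sK] sK img] by simp
  moreover have "k \<in> K" using k unfolding K_def by simp
  ultimately obtain v where "v \<in> K" "B *v v = k" by force
  then show ?thesis unfolding K_def by auto
qed

lemma key:
  fixes A B :: "'a::field^'n^'n"
  assumes comm: "A ** B = B ** A"
    and ker: "\<And>v. A *v v = 0 \<Longrightarrow> B *v v = 0 \<Longrightarrow> v = 0"
  shows "vec.subspace U \<Longrightarrow> (*v) A ` U \<subseteq> U \<Longrightarrow> (*v) B ` U \<subseteq> U \<Longrightarrow> x \<in> U \<Longrightarrow> y \<in> U
    \<Longrightarrow> A *v x = B *v y \<Longrightarrow> \<exists>w\<in>U. B *v w = x \<and> A *v w = y"
proof (induction "vec.dim U" arbitrary: U x y rule: less_induct)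
  case less
  have "\<exists>u\<in>U. A *v u = y"
  proof (cases "(*v) A ` U = U")
    case True then show ?thesis using less.prems by force
  next
    case False
    let ?U = "(*v) A ` U"
    have sU: "vec.subspace ?U" by (rule vec.subspace_image[OF less.prems(1)])
    have "vec.dim ?U < vec.dim U"
      proof -
      have e: "vec.span ?U = ?U" "vec.span U = U" using sU less.prems(1) vec.span_eq_iff by blast+
      have "?U \<subset> U" using False less.prems(2) by auto
      then have "vec.span ?U \<subset> vec.span U" by (simp only: e)
      then show ?thesis by (rule vec.dim_psubset)
    qed
    moreover have "(*v) A ` ?U \<subseteq> ?U" using less.prems(2) by auto
    moreover have "(*v) B ` ?U \<subseteq> ?U"
    proof
      fix z assume "z \<in> (*v) B ` ?U"
      then obtain u where u: "u \<in> U" "z = B *v (A *v u)" by auto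
      then have "z = A *v (B *v u)" using comm by (simp add: matrix_vector_mul_assoc)
      then show "z \<in> ?U" using u less.prems(3) by auto
    qed
    moreover have "A *v (A *v x) = B *v (A *v y)"
      using less.prems(6) comm by (simp add: matrix_vector_mul_assoc)
    ultimately obtain w where w: "w \<in> ?U" "B *v w = A *v x" "A *v w = A *v y"
      using less.hyps[OF _ sU] less.prems(4,5) by blast
    then obtain u where u: "u \<in> U" "w = A *v u" by auto
    have "A *v (w - y) = 0" using w by (simp add: vec.diff)
    moreover have "B *v (w - y) = 0"
      using w less.prems(6) by (simp add: vec.diff)
    ultimately have "w = y" using ker by force
    then show ?thesis using u by auto
  qed
  then obtain u where u: "u \<in> U" "A *v u = y" by auto
  have "B *v u - x \<in> U"
    using u less.prems by (intro vec.subspace_diff) auto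
  moreover have "A *v (B *v u - x) = 0"
    using u less.prems(6) comm by (simp add: vec.diff matrix_vector_mul_assoc flip: matrix_vector_mul_assoc[of B A])
  ultimately obtain v where v: "v \<in> U" "A *v v = 0" "B *v v = B *v u - x"
    using surjK[OF comm ker less.prems(1,3)] by blast
  show ?case
    by (rule bexI[of _ "u - v"]) (use u v less.prems in \<open>auto simp: vec.diff intro: vec.subspace_diff\<close>)
qed


lemma sub_F:
  fixes A B A' B' :: "complex^'d^'d"
  assumes S: "comm_subalgebra \<A>"
    and mem: "A \<in> \<A>" "B \<in> \<A>" "A' \<in> \<A>" "B' \<in> \<A>"
    and ker: "\<And>v. A *v v = 0 \<Longrightarrow> B *v v = 0 \<Longrightarrow> v = 0"
    and eq: "A ** B' = A' ** B"
  shows "F_set n \<A> A B \<subseteq> F_set n \<A> A' B'"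
proof
  have comm: "\<And>X Y. X \<in> \<A> \<Longrightarrow> Y \<in> \<A> \<Longrightarrow> X ** Y = Y ** X"
    using S unfolding comm_subalgebra_def by blast
  fix M assume "M \<in> F_set n \<A> A B"
  then obtain T where M: "M = block_toeplitz n T"
    and T1: "\<forall>j. - (int n - 1) \<le> j \<and> j \<le> int n - 1 \<longrightarrow> T j \<in> \<A>"
    and T2: "\<forall>j. 1 \<le> j \<and> j \<le> int n - 1 \<longrightarrow> A ** T j = B ** T (j - int n)"
    unfolding F_set_def by blast
  have "A' ** T j = B' ** T (j - int n)" if j: "1 \<le> j" "j \<le> int n - 1" for j
  proof -
    have P: "T j \<in> \<A>" and Q: "T (j - int n) \<in> \<A>" using T1 j by auto
    have AB: "A ** T j = B ** T (j - int n)" using T2 j by auto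
    have cAB: "A ** B = B ** A" using comm mem by auto
    have "(A' ** T j) *v v = (B' ** T (j - int n)) *v v" for v
    proof -
      define x where "x = T j *v v"
      define y where "y = T (j - int n) *v v"
      have "A *v x = B *v y" unfolding x_def y_def
        using AB by (simp add: matrix_vector_mul_assoc)
      then obtain w where w: "B *v w = x" "A *v w = y"
        using key[OF cAB ker, of UNIV x y] by auto
      have "(A' ** T j) *v v = (A' ** B) *v w"
        by (simp add: w x_def flip: matrix_vector_mul_assoc)
      also have "\<dots> = (B' ** A) *v w" using eq comm[OF mem(1,4)] by simp
      also have "\<dots> = (B' ** T (j - int n)) *v v"
        by (simp add: w y_def flip: matrix_vector_mul_assoc)
      finally show ?thesis .
    qed
    then show ?thesis by (simp add: matrix_eq)
  qed
  then show "M \<in> F_set n \<A> A' B'" unfolding F_set_def using M T1 by blast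
qed

theorem theorem4p6:
  fixes n :: nat and \<A> :: "(complex^'d^'d) set" and A B A' B' :: "complex^'d^'d"
  assumes "n \<ge> 2"
    and "maximal_comm_subalgebra \<A>"
    and "A \<in> \<A>" "B \<in> \<A>" "A' \<in> \<A>" "B' \<in> \<A>"
    and "ker_mat A \<inter> ker_mat B = {0}"
    and "ker_mat A' \<inter> ker_mat B' = {0}"
  shows "F_set n \<A> A B = F_set n \<A> A' B' \<longleftrightarrow> A ** B' = A' ** B"
proof -
  have S: "comm_subalgebra \<A>" using assms(2) unfolding maximal_comm_subalgebra_def by blast
  have comm: "\<And>X Y. X \<in> \<A> \<Longrightarrow> Y \<in> \<A> \<Longrightarrow> X ** Y = Y ** X"
    using S unfolding comm_subalgebra_def by blast
  have z: "0 \<in> \<A>" using S unfolding comm_subalgebra_def by blast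
  have k1: "\<And>v. A *v v = 0 \<Longrightarrow> B *v v = 0 \<Longrightarrow> v = 0"
    using assms(7) unfolding ker_mat_def by blast
  have k2: "\<And>v. A' *v v = 0 \<Longrightarrow> B' *v v = 0 \<Longrightarrow> v = 0"
    using assms(8) unfolding ker_mat_def by blast
  show ?thesis
  proof
    assume E: "F_set n \<A> A B = F_set n \<A> A' B'"
    define T :: "int \<Rightarrow> complex^'d^'d" where
      "T = (\<lambda>j. if j = 1 then B else if j = 1 - int n then A else 0)"
    have "block_toeplitz n T \<in> F_set n \<A> A B"
      unfolding F_set_def
    proof (intro CollectI exI conjI allI impI)
      show "block_toeplitz n T = block_toeplitz n T" ..
      fix j :: int
      show "T j \<in> \<A>" unfolding T_def using assms z by auto
    next
      fix j :: int assume j: "1 \<le> j \<and> j \<le> int n - 1"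
      show "A ** T j = B ** T (j - int n)"
      proof (cases "j = 1")
        case True then show ?thesis using comm[OF assms(3,4)] assms(1) by (simp add: T_def)
      next
        case False then show ?thesis using j assms(1) by (simp add: T_def)
      qed
    qed
    then have "block_toeplitz n T \<in> F_set n \<A> A' B'" using E by simp
    then obtain T' where BT: "block_toeplitz n T = block_toeplitz n T'"
      and T2: "\<forall>j. 1 \<le> j \<and> j \<le> int n - 1 \<longrightarrow> A' ** T' j = B' ** T' (j - int n)"
      unfolding F_set_def by blast
    have "block_toeplitz n T 1 0 = block_toeplitz n T' 1 0" using BT by simp
    then have t1: "T' 1 = B" using assms(1) by (simp add: block_toeplitz_def T_def)
    have "block_toeplitz n T 0 (n - 1) = block_toeplitz n T' 0 (n - 1)" using BT by simp
    moreover have "int 0 - int (n - 1) = 1 - int n" using assms(1) by simp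
    ultimately have t2: "T' (1 - int n) = A" using assms(1) by (simp add: block_toeplitz_def T_def)
    have "A' ** B = B' ** A" using T2[rule_format, of 1] assms(1) t1 t2 by simp
    then show "A ** B' = A' ** B" using comm[OF assms(3,6)] by simp
  next
    assume eq: "A ** B' = A' ** B"
    show "F_set n \<A> A B = F_set n \<A> A' B'"
    proof
      show "F_set n \<A> A B \<subseteq> F_set n \<A> A' B'"
        by (rule sub_F[OF S assms(3-6) k1 eq])
      show "F_set n \<A> A' B' \<subseteq> F_set n \<A> A B"
        by (rule sub_F[OF S assms(5,6,3,4) k2 eq[symmetric]])
    qed
  qed
qed

end
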